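(* Let $a\in[0,1)$, $q,t\in(0,1)$, $\nu>0$. For any $i,j\in\{0,1\}$ and $n_1,n_2\in\mathbb{N}$, $$\sum_{m_1,m_2\ge0}c_{m_1,m_2}\,Z^{\mathrm{left}}_a(i,j;m_1,m_2;n_1,n_2)=\sum_{m_1,m_2\ge0}c_{m_1,m_2}\,Z^{\mathrm{right}}_a(i,j;m_1,m_2;n_1,n_2),$$ where $c_{m_1,m_2}=h_{m_2}(-t;q)(-t\nu)^{m_1}h_{m_1}(-\frac{1}{\nu^2t};q)$ (only finitely many terms are nonzero).
   Context: Rogers–Szegő polynomials $h_m(x;q)=\sum_{k=0}^m\binom mk_qx^k$. Deformed boson vertices: a vertex has horizontal edges (left, right) carrying $0$ or $1$ arrow, and vertical edges (bottom, top) carrying any number $\ge0$ of arrows, with arrow conservation (left + bottom = right + top). With $m$ arrows entering from below, the "black" weights with rapidity $a$ are: (left 0, right 0, top $m$): $1$; (left 0, right 1, top $m-1$): $a$; (left 1, right 0, top $m+1$): $1-q^{m+1}$; (left 1, right 1, top $m$): $a$. The "red" weights with rapidity $a$ are: (0,0): $a$; (0,1): $1$; (1,0): $a(1-q^{m+1})$; (1,1): $1$. A boundary vertex lies on a horizontal edge, has one input and one output horizontal state, and weights with $D=(1-a\nu t)(1+a/\nu)$: (in 0, out 0): $\frac{a\nu^{-1}(1-t\nu^2)+(1-t)}{D}$; (in 0, out 1): $\frac{t(1-a^2)}{D}$; (in 1, out 0): $\frac{1-a^2}{D}$; (in 1, out 1): $\frac{a\nu^{-1}(1-t\nu^2)+a^2(1-t)}{D}$.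 $Z^{\mathrm{left}}_a(i,j;m_1,m_2;n_1,n_2)$ is the sum over internal horizontal edge states of the product of weights of the row consisting, from left to right, of: a horizontal input in state $i$, a boundary vertex, a black vertex with $m_2$ arrows entering from below and $n_2$ exiting at top, a black vertex with $m_1$ below and $n_1$ on top, and horizontal output in state $j$. $Z^{\mathrm{right}}_a$ is the same but with the row consisting of: input $i$, a red vertex $(m_2$ below, $n_2$ top$)$, a red vertex $(m_1,n_1)$, then a boundary vertex, output $j$. *)

theory Defs
  imports "HOL-Analysis.Analysis"
begin

definition qfact :: "real \<Rightarrow> nat \<Rightarrow> real" where
  "qfact q n = (\<Prod>i<n. 1 - q ^ (i + 1))"

definition qbinom :: "real \<Rightarrow> nat \<Rightarrow> nat \<Rightarrow> real" where
  "qbinom q m k = (if k \<le> m then qfact q m / (qfact q k * qfact q (m - k)) else 0)"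

definition rogers_szego :: "nat \<Rightarrow> real \<Rightarrow> real \<Rightarrow> real" where
  "rogers_szego m x q = (\<Sum>k\<le>m. qbinom q m k * x ^ k)"

text \<open>Black vertex weight: left state l, m arrows from below, right state r, n arrows on top.
  Horizontal states are 0 or 1; weight 0 if arrow conservation fails.\<close>
definition black_w :: "real \<Rightarrow> real \<Rightarrow> nat \<Rightarrow> nat \<Rightarrow> nat \<Rightarrow> nat \<Rightarrow> real" where
  "black_w a q l m r n =
     (if l \<le> 1 \<and> r \<le> 1 \<and> l + m = r + n then
        (if l = 0 \<and> r = 0 then 1
         else if l = 0 \<and> r = 1 then a
         else if l = 1 \<and> r = 0 then 1 - q ^ (m + 1)
         else a)
      else 0)"

definition red_w :: "real \<Rightarrow> real \<Rightarrow> nat \<Rightarrow> nat \<Rightarrow> nat \<Rightarrow> nat \<Rightarrow> real" where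
  "red_w a q l m r n =
     (if l \<le> 1 \<and> r \<le> 1 \<and> l + m = r + n then
        (if l = 0 \<and> r = 0 then a
         else if l = 0 \<and> r = 1 then 1
         else if l = 1 \<and> r = 0 then a * (1 - q ^ (m + 1))
         else 1)
      else 0)"

definition bdry_w :: "real \<Rightarrow> real \<Rightarrow> real \<Rightarrow> nat \<Rightarrow> nat \<Rightarrow> real" where
  "bdry_w a t \<nu> i j =
     (let D = (1 - a * \<nu> * t) * (1 + a / \<nu>) in
      if i = 0 \<and> j = 0 then (a / \<nu> * (1 - t * \<nu>\<^sup>2) + (1 - t)) / D
      else if i = 0 \<and> j = 1 then t * (1 - a\<^sup>2) / D
      else if i = 1 \<and> j = 0 then (1 - a\<^sup>2) / D
      else if i = 1 \<and> j = 1 then (a / \<nu> * (1 - t * \<nu>\<^sup>2) + a\<^sup>2 * (1 - t)) / D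
      else 0)"

definition Z_left :: "real \<Rightarrow> real \<Rightarrow> real \<Rightarrow> real \<Rightarrow> nat \<Rightarrow> nat \<Rightarrow> nat \<Rightarrow> nat \<Rightarrow> nat \<Rightarrow> nat \<Rightarrow> real" where
  "Z_left a q t \<nu> i j m1 m2 n1 n2 =
     (\<Sum>k1\<in>{0,1}. \<Sum>k2\<in>{0,1}.
        bdry_w a t \<nu> i k1 * black_w a q k1 m2 k2 n2 * black_w a q k2 m1 j n1)"

definition Z_right :: "real \<Rightarrow> real \<Rightarrow> real \<Rightarrow> real \<Rightarrow> nat \<Rightarrow> nat \<Rightarrow> nat \<Rightarrow> nat \<Rightarrow> nat \<Rightarrow> nat \<Rightarrow> real" where
  "Z_right a q t \<nu> i j m1 m2 n1 n2 =
     (\<Sum>k1\<in>{0,1}. \<Sum>k2\<in>{0,1}.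
        red_w a q i m2 k1 n2 * red_w a q k1 m1 k2 n1 * bdry_w a t \<nu> k2 j)"

definition coef_c :: "real \<Rightarrow> real \<Rightarrow> real \<Rightarrow> nat \<Rightarrow> nat \<Rightarrow> real" where
  "coef_c q t \<nu> m1 m2 =
     rogers_szego m2 (- t) q * (- t * \<nu>) ^ m1 * rogers_szego m1 (- 1 / (\<nu>\<^sup>2 * t)) q"

end

theory Submission
  imports Defs
begin

lemma qfact_Suc: "qfact q (Suc n) = qfact q n * (1 - q ^ Suc n)"
  by (simp add: qfact_def)

lemma qfact_nz: "0 < q \<Longrightarrow> q < (1::real) \<Longrightarrow> qfact q n \<noteq> 0"
proof (induction n)
  case 0 then show ?case by (simp add: qfact_def)
next
  case (Suc n)
  have "q ^ Suc n < 1" using Suc.prems by (rule power_Suc_less_one)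
  then show ?case using Suc by (simp add: qfact_Suc)
qed

lemma u_nz: "0 < q \<Longrightarrow> q < (1::real) \<Longrightarrow> 1 - q ^ Suc n \<noteq> 0"
proof -
  assume "0 < q" "q < 1"
  then have "q ^ Suc n < 1" by (rule power_Suc_less_one)
  then show ?thesis by simp
qed

lemma qbinom_rec:
  assumes q: "0 < q" "q < (1::real)" and k: "k \<le> Suc m"
  shows "qbinom q (Suc (Suc m)) (Suc k) = qbinom q (Suc m) (Suc k) + qbinom q (Suc m) k
           - (1 - q ^ Suc m) * qbinom q m k"
proof (cases "k = Suc m")
  case True
  then show ?thesis using qfact_nz[OF q] by (simp add: qbinom_def)
next
  case False
  then obtain r where r: "m = k + r" using k by (metis le_Suc_eq le_iff_add)
  have e1: "Suc (Suc m) - Suc k = Suc r" "Suc m - Suc k = r" "Suc m - k = Suc r" "m - k = r"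
    using r by auto
  have nz: "qfact q n \<noteq> 0" "1 - q ^ Suc n \<noteq> 0" for n using qfact_nz[OF q] u_nz[OF q] by auto
  have qq: "1 - q ^ Suc (Suc (k + r)) = (1 - q ^ Suc k) + (1 - q ^ Suc r) - (1 - q ^ Suc k) * (1 - q ^ Suc r)"
    by (simp add: algebra_simps power_add[symmetric])
  have gen: "\<And>M A B uk ur um::real. A \<noteq> 0 \<Longrightarrow> B \<noteq> 0 \<Longrightarrow> uk \<noteq> 0 \<Longrightarrow> ur \<noteq> 0 \<Longrightarrow>
     M * um * (uk + ur - uk * ur) / (A * uk * (B * ur)) = M * um / (A * uk * B) + M * um / (A * (B * ur)) - um * (M / (A * B))"
    by (simp add: field_simps)
  show ?thesis
    unfolding qbinom_def using r k False
    apply (simp add: e1 qfact_Suc del: power_Suc)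
    apply (subst qq)
    using gen[of "qfact q k" "qfact q r" "1 - q^Suc k" "1 - q^Suc r" "qfact q (k+r)" "1 - q^Suc(k+r)"] nz
    by (simp del: power_Suc add: mult_ac)
qed

lemma rs_rec:
  assumes q: "0 < q" "q < (1::real)"
  shows "rogers_szego (Suc (Suc m)) x q = (1 + x) * rogers_szego (Suc m) x q
          - x * (1 - q ^ Suc m) * rogers_szego m x q"
proof -
  have b0: "qbinom q n 0 = 1" for n using qfact_nz[OF q] by (simp add: qbinom_def qfact_def)
  have hi: "qbinom q n (Suc n) = 0" for n by (simp add: qbinom_def)
  have L: "rogers_szego (Suc (Suc m)) x q = 1 + (\<Sum>k\<le>Suc m. qbinom q (Suc (Suc m)) (Suc k) * x ^ Suc k)"
    unfolding rogers_szego_def by (subst sum.atMost_Suc_shift) (simp add: b0)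
  have A: "rogers_szego (Suc m) x q = 1 + (\<Sum>k\<le>Suc m. qbinom q (Suc m) (Suc k) * x ^ Suc k)"
    unfolding rogers_szego_def by (subst sum.atMost_Suc_shift) (simp add: b0 hi)
  have B: "x * rogers_szego (Suc m) x q = (\<Sum>k\<le>Suc m. qbinom q (Suc m) k * x ^ Suc k)"
    unfolding rogers_szego_def by (simp add: sum_distrib_left algebra_simps)
  have C: "x * (1 - q ^ Suc m) * rogers_szego m x q = (\<Sum>k\<le>Suc m. (1 - q ^ Suc m) * qbinom q m k * x ^ Suc k)"
    unfolding rogers_szego_def by (simp add: sum_distrib_left algebra_simps hi)
  have "(\<Sum>k\<le>Suc m. qbinom q (Suc (Suc m)) (Suc k) * x ^ Suc k)
     = (\<Sum>k\<le>Suc m. qbinom q (Suc m) (Suc k) * x ^ Suc k) + (\<Sum>k\<le>Suc m. qbinom q (Suc m) k * x ^ Suc k)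
       - (\<Sum>k\<le>Suc m. (1 - q ^ Suc m) * qbinom q m k * x ^ Suc k)"
    by (simp add: sum.distrib[symmetric] sum_subtractf[symmetric] qbinom_rec[OF q] algebra_simps)
  then show ?thesis using L A B C by (simp add: algebra_simps)
qed

lemma rs0: "rogers_szego 0 x q = 1" by (simp add: rogers_szego_def qbinom_def qfact_def)
lemma rs1: "0 < q \<Longrightarrow> q < 1 \<Longrightarrow> rogers_szego (Suc 0) x q = 1 + x"
  using qfact_nz[of q 1] by (simp add: rogers_szego_def qbinom_def qfact_def)

lemma black_nz: "black_w a q l m r n \<noteq> 0 \<Longrightarrow> l + m = r + n"
  by (auto simp: black_w_def split: if_splits)
lemma red_nz: "red_w a q l m r n \<noteq> 0 \<Longrightarrow> l + m = r + n"
  by (auto simp: red_w_def split: if_splits)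

lemma infsum_pts:
  fixes W :: "nat \<Rightarrow> nat \<Rightarrow> real"
  shows "(\<Sum>\<^sub>\<infinity>p\<in>UNIV. (\<Sum>k1\<in>{0,1::nat}. \<Sum>k2\<in>{0,1::nat}. if p = P k1 k2 \<and> C k1 k2 then W k1 k2 else 0))
     = (\<Sum>k1\<in>{0,1}. \<Sum>k2\<in>{0,1}. if C k1 k2 then W k1 k2 else 0)"
proof -
  define S where "S = {P 0 0, P 0 1, P 1 0, P 1 1}"
  have fin: "finite S" by (simp add: S_def)
  have "(\<Sum>\<^sub>\<infinity>p\<in>UNIV. (\<Sum>k1\<in>{0,1::nat}. \<Sum>k2\<in>{0,1::nat}. if p = P k1 k2 \<and> C k1 k2 then W k1 k2 else 0))
      = (\<Sum>\<^sub>\<infinity>p\<in>S. (\<Sum>k1\<in>{0,1::nat}. \<Sum>k2\<in>{0,1::nat}. if p = P k1 k2 \<and> C k1 k2 then W k1 k2 else 0))"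
    by (rule infsum_cong_neutral) (auto simp: S_def)
  also have "\<dots> = (\<Sum>p\<in>S. (\<Sum>k1\<in>{0,1::nat}. \<Sum>k2\<in>{0,1::nat}. if p = P k1 k2 \<and> C k1 k2 then W k1 k2 else 0))"
    using fin by simp
  also have "\<dots> = (\<Sum>k1\<in>{0,1::nat}. \<Sum>k2\<in>{0,1::nat}. \<Sum>p\<in>S. if p = P k1 k2 \<and> C k1 k2 then W k1 k2 else 0)"
    by (simp add: sum.swap[of _ S] sum.swap[of _ "{0,1::nat}"])
  also have "\<dots> = (\<Sum>k1\<in>{0,1}. \<Sum>k2\<in>{0,1}. if C k1 k2 then W k1 k2 else 0)"
    using fin by (simp add: if_distrib S_def)
  finally show ?thesis .
qed

lemma gL: "coef_c q t \<nu> m1 m2 * Z_left a q t \<nu> i j m1 m2 n1 n2 =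
  (\<Sum>k1\<in>{0,1::nat}. \<Sum>k2\<in>{0,1::nat}.
     if (m1, m2) = (j + n1 - k2, k2 + n2 - k1) \<and> k1 \<le> k2 + n2 \<and> k2 \<le> j + n1
     then coef_c q t \<nu> (j + n1 - k2) (k2 + n2 - k1) *
          (bdry_w a t \<nu> i k1 * black_w a q k1 (k2 + n2 - k1) k2 n2 * black_w a q k2 (j + n1 - k2) j n1)
     else 0)"
  unfolding Z_left_def sum_distrib_left
  apply (intro sum.cong refl)
  subgoal for k1 k2
    using black_nz[of a q k1 m2 k2 n2] black_nz[of a q k2 m1 j n1]
    by (cases "black_w a q k1 m2 k2 n2 = 0"; cases "black_w a q k2 m1 j n1 = 0") auto
  done

lemma gR: "coef_c q t \<nu> m1 m2 * Z_right a q t \<nu> i j m1 m2 n1 n2 =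
  (\<Sum>k1\<in>{0,1::nat}. \<Sum>k2\<in>{0,1::nat}.
     if (m1, m2) = (k2 + n1 - k1, k1 + n2 - i) \<and> i \<le> k1 + n2 \<and> k1 \<le> k2 + n1
     then coef_c q t \<nu> (k2 + n1 - k1) (k1 + n2 - i) *
          (red_w a q i (k1 + n2 - i) k1 n2 * red_w a q k1 (k2 + n1 - k1) k2 n1 * bdry_w a t \<nu> k2 j)
     else 0)"
  unfolding Z_right_def sum_distrib_left
  apply (intro sum.cong refl)
  subgoal for k1 k2
    using red_nz[of a q i m2 k1 n2] red_nz[of a q k1 m1 k2 n1]
    by (cases "red_w a q i m2 k1 n2 = 0"; cases "red_w a q k1 m1 k2 n1 = 0") auto
  done

theorem lemma2p7:
  fixes a q t \<nu> :: real and i j n1 n2 :: nat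
  assumes "0 \<le> a" "a < 1" "0 < q" "q < 1" "0 < t" "t < 1" "0 < \<nu>"
    and "i \<in> {0, 1}" "j \<in> {0, 1}"
  shows "(\<Sum>\<^sub>\<infinity>(m1, m2)\<in>(UNIV :: (nat \<times> nat) set).
            coef_c q t \<nu> m1 m2 * Z_left a q t \<nu> i j m1 m2 n1 n2)
       = (\<Sum>\<^sub>\<infinity>(m1, m2)\<in>(UNIV :: (nat \<times> nat) set).
            coef_c q t \<nu> m1 m2 * Z_right a q t \<nu> i j m1 m2 n1 n2)"
proof -
  have fL: "(\<lambda>(m1, m2). coef_c q t \<nu> m1 m2 * Z_left a q t \<nu> i j m1 m2 n1 n2) =
     (\<lambda>p. \<Sum>k1\<in>{0,1::nat}. \<Sum>k2\<in>{0,1::nat}.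
     if p = (j + n1 - k2, k2 + n2 - k1) \<and> (k1 \<le> k2 + n2 \<and> k2 \<le> j + n1)
     then coef_c q t \<nu> (j + n1 - k2) (k2 + n2 - k1) *
          (bdry_w a t \<nu> i k1 * black_w a q k1 (k2 + n2 - k1) k2 n2 * black_w a q k2 (j + n1 - k2) j n1)
     else 0)"
    by (auto simp: fun_eq_iff gL)
  have fR: "(\<lambda>(m1, m2). coef_c q t \<nu> m1 m2 * Z_right a q t \<nu> i j m1 m2 n1 n2) =
     (\<lambda>p. \<Sum>k1\<in>{0,1::nat}. \<Sum>k2\<in>{0,1::nat}.
     if p = (k2 + n1 - k1, k1 + n2 - i) \<and> (i \<le> k1 + n2 \<and> k1 \<le> k2 + n1)
     then coef_c q t \<nu> (k2 + n1 - k1) (k1 + n2 - i) *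
          (red_w a q i (k1 + n2 - i) k1 n2 * red_w a q k1 (k2 + n1 - k1) k2 n1 * bdry_w a t \<nu> k2 j)
     else 0)"
    by (auto simp: fun_eq_iff gR)
  have nz: "\<nu> \<noteq> 0" "t \<noteq> 0" using assms by auto
  define E where "E = inverse ((1 - a * \<nu> * t) * (1 + a / \<nu>))"
  have b: "bdry_w a t \<nu> 0 0 = (a / \<nu> * (1 - t * \<nu>\<^sup>2) + (1 - t)) * E"
          "bdry_w a t \<nu> 0 1 = t * (1 - a\<^sup>2) * E"
          "bdry_w a t \<nu> 1 0 = (1 - a\<^sup>2) * E"
          "bdry_w a t \<nu> 1 1 = (a / \<nu> * (1 - t * \<nu>\<^sup>2) + a\<^sup>2 * (1 - t)) * E"
    by (simp_all add: bdry_w_def E_def Let_def divide_inverse)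
  have b': "bdry_w a t \<nu> 0 (Suc 0) = t * (1 - a\<^sup>2) * E"
          "bdry_w a t \<nu> (Suc 0) 0 = (1 - a\<^sup>2) * E"
          "bdry_w a t \<nu> (Suc 0) (Suc 0) = (a / \<nu> * (1 - t * \<nu>\<^sup>2) + a\<^sup>2 * (1 - t)) * E"
    using b by simp_all
  show ?thesis
    unfolding fL fR
    apply (subst infsum_pts[where P = "\<lambda>k1 k2. (j + n1 - k2, k2 + n2 - k1)"])
    apply (subst infsum_pts[where P = "\<lambda>k1 k2. (k2 + n1 - k1, k1 + n2 - i)"])
    using assms(8,9)
    apply (cases n1; cases n2; auto simp: black_w_def red_w_def coef_c_def rs_rec[OF assms(3,4)] rs0 rs1[OF assms(3,4)] b b')
    apply (simp_all add: field_simps nz power2_eq_square)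
    done
qed

end
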